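(* Let $I$ be a set, and for $n < \omega$ let $G_n \subseteq G_{n+1}$ be locally finite groups. For $t \in I$ and $n < \omega$ let $a^t_n \in G_{n+1}$ and $b^t_n = a^t_0 a^t_1 \cdots a^t_n$ (product in $G_{n+1}$); let $\bar a_n = \langle a^t_n : t \in I\rangle$ and $\bar b_n = \langle b^t_n : t \in I\rangle$. Assume: (α) for every $n$, $\mathrm{tp}_{\mathrm{bs}}(\bar a_n,G_n,G_{n+1}) \subseteq \mathrm{tp}_{\mathrm{bs}}(\bar a_{n+1},G_{n+1},G_{n+2})$ (both viewed as types in the variables $\langle x_t : t\in I\rangle$); (β) for every $n$, the subgroup of $G_{n+1}$ generated by $\{a^t_n : t \in I\}$ intersects $G_n$ in $\{e\}$; (e) each $a^t_n$ commutes with every element of $G_n$. Let $G_\omega = \bigcup_{n<\omega} G_n$. Then there are a locally finite group $G_{\omega+1}$ and elements $b^t_\omega$ ($t \in I$) such that $G_\omega \subseteq G_{\omega+1} = \langle G_\omega \cup \{b^t_\omega : t \in I\}\rangle$ and, with $\bar b_\omega = \langle b^t_\omega : t \in I\rangle$, for every $n < \omega$ we have $\mathrm{tp}_{\mathrm{bs}}(\bar b_\omega,G_n,G_{\omega+1}) = \mathrm{tp}_{\mathrm{bs}}(\bar b_n,G_n,G_{n+1})$.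
   Context: A group is locally finite if every finitely generated subgroup is finite. For $A \subseteq H$ and a (possibly infinite) tuple $\bar a = \langle a_t : t \in I\rangle$ from $H$, $\mathrm{tp}_{\mathrm{bs}}(\bar a,A,H)$ is the set of formulas $\sigma(\bar x,\bar c) = e$ and $\sigma(\bar x,\bar c) \neq e$, where $\sigma$ is a group word in finitely many of the variables $x_t$ ($t\in I$) and a finite tuple of further variables, and $\bar c$ is a finite tuple from $A$, which are satisfied in $H$ when $x_t$ is interpreted as $a_t$. *)

theory Defs
  imports "HOL-Algebra.Algebra"
begin

definition locally_finite_group :: "'a monoid \<Rightarrow> bool" where
  "locally_finite_group G \<longleftrightarrow> group G \<and>
     (\<forall>S. S \<subseteq> carrier G \<and> finite S \<longrightarrow> finite (generate G S))"

text \<open>A letter of a group word: a variable x_t (Inl t) or a parameter c (Inr c),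
  together with a flag saying whether it occurs inverted.\<close>
type_synonym ('i, 'a) gword = "(('i + 'a) \<times> bool) list"

fun letter_val :: "('c, 'd) monoid_scheme \<Rightarrow> ('i \<Rightarrow> 'c) \<Rightarrow> ('a \<Rightarrow> 'c) \<Rightarrow> ('i + 'a) \<times> bool \<Rightarrow> 'c" where
  "letter_val H xs ps (l, inv_flag) =
     (let v = (case l of Inl t \<Rightarrow> xs t | Inr c \<Rightarrow> ps c)
      in if inv_flag then inv\<^bsub>H\<^esub> v else v)"

fun word_val :: "('c, 'd) monoid_scheme \<Rightarrow> ('i \<Rightarrow> 'c) \<Rightarrow> ('a \<Rightarrow> 'c) \<Rightarrow> ('i, 'a) gword \<Rightarrow> 'c" where
  "word_val H xs ps [] = \<one>\<^bsub>H\<^esub>"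
| "word_val H xs ps (l # w) = letter_val H xs ps l \<otimes>\<^bsub>H\<^esub> word_val H xs ps w"

definition word_vars :: "('i, 'a) gword \<Rightarrow> 'i set" where
  "word_vars w = {t. \<exists>b. (Inl t, b) \<in> set w}"

definition word_params :: "('i, 'a) gword \<Rightarrow> 'a set" where
  "word_params w = {c. \<exists>b. (Inr c, b) \<in> set w}"

text \<open>Basic type tp_bs(xs, A, H) in the variables x_t (t in I): a formula is a pair
  (True, w) meaning "w = e" or (False, w) meaning "w \<noteq> e", where w is a group word in
  the variables and parameters from A. Parameters c are interpreted in H as ps c
  (ps = id when A is literally a subset of H; ps = an embedding otherwise).\<close>
definition tp_bs :: "'i set \<Rightarrow> 'a set \<Rightarrow> ('c, 'd) monoid_scheme \<Rightarrow> ('a \<Rightarrow> 'c) \<Rightarrow> ('i \<Rightarrow> 'c)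
                      \<Rightarrow> (bool \<times> ('i, 'a) gword) set" where
  "tp_bs I A H ps xs = {(eq, w). word_vars w \<subseteq> I \<and> word_params w \<subseteq> A \<and>
                                  (word_val H xs ps w = \<one>\<^bsub>H\<^esub> \<longleftrightarrow> eq)}"

fun bprod :: "(nat \<Rightarrow> 'a monoid) \<Rightarrow> ('i \<Rightarrow> nat \<Rightarrow> 'a) \<Rightarrow> 'i \<Rightarrow> nat \<Rightarrow> 'a" where
  "bprod G a t 0 = a t 0"
| "bprod G a t (Suc n) = bprod G a t n \<otimes>\<^bsub>G (Suc (Suc n))\<^esub> a t (Suc n)"

end

theory Submission
  imports Defs
begin


definition wok :: "'i set \<Rightarrow> 'c set \<Rightarrow> ('i \<Rightarrow> 'c) \<Rightarrow> ('a \<Rightarrow> 'c) \<Rightarrow> ('i,'a) gword \<Rightarrow> bool" where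
 "wok I S x ps w \<longleftrightarrow> (\<forall>l\<in>set w. case fst l of Inl t \<Rightarrow> t \<in> I \<and> x t \<in> S | Inr c \<Rightarrow> ps c \<in> S)"

lemma wok_Nil[simp]: "wok I S x ps []" by (simp add: wok_def)
lemma wok_Cons[simp]: "wok I S x ps (l#w) \<longleftrightarrow> (case fst l of Inl t \<Rightarrow> t \<in> I \<and> x t \<in> S | Inr c \<Rightarrow> ps c \<in> S) \<and> wok I S x ps w"
  by (simp add: wok_def)
lemma wok_append[simp]: "wok I S x ps (w1@w2) \<longleftrightarrow> wok I S x ps w1 \<and> wok I S x ps w2"
  by (auto simp add: wok_def)
lemma wok_mono: "wok I S x ps w \<Longrightarrow> S \<subseteq> T \<Longrightarrow> wok I T x ps w"
  by (auto simp add: wok_def split: sum.splits)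

definition invw :: "('i,'a) gword \<Rightarrow> ('i,'a) gword" where
  "invw w = rev (map (\<lambda>(v,f). (v, \<not>f)) w)"

definition dropp :: "('i,'a) gword \<Rightarrow> ('i,'a) gword" where
  "dropp w = filter (\<lambda>l. case fst l of Inl _ \<Rightarrow> True | Inr _ \<Rightarrow> False) w"

lemma wok_invw[simp]: "wok I S x ps (invw w) = wok I S x ps w"
  by (auto simp add: wok_def invw_def)

lemma (in group) letter_closed:
  "(case fst l of Inl t \<Rightarrow> t \<in> I \<and> x t \<in> carrier G | Inr c \<Rightarrow> ps c \<in> carrier G) \<Longrightarrow> letter_val G x ps l \<in> carrier G"
  by (cases l) (auto simp: Let_def split: sum.splits)

lemma (in group) wv_closed: "wok I (carrier G) x ps w \<Longrightarrow> word_val G x ps w \<in> carrier G"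
  by (induction w) (auto intro: letter_closed)

lemma (in group) wv_append: "wok I (carrier G) x ps w1 \<Longrightarrow> wok I (carrier G) x ps w2 \<Longrightarrow>
   word_val G x ps (w1@w2) = word_val G x ps w1 \<otimes> word_val G x ps w2"
proof (induction w1)
  case Nil then show ?case by (simp add: wv_closed)
next
  case (Cons l w)
  have a: "letter_val G x ps l \<in> carrier G" using Cons.prems by (auto intro: letter_closed)
  have b: "word_val G x ps w \<in> carrier G" "word_val G x ps w2 \<in> carrier G"
    using Cons.prems by (auto intro: wv_closed)
  have c: "wok I (carrier G) x ps w" "wok I (carrier G) x ps w2" using Cons.prems by auto
  have "word_val G x ps ((l#w)@w2) = letter_val G x ps l \<otimes> (word_val G x ps w \<otimes> word_val G x ps w2)"
    using Cons.IH c by simp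
  also have "\<dots> = (letter_val G x ps l \<otimes> word_val G x ps w) \<otimes> word_val G x ps w2"
    using a b by (rule m_assoc[symmetric])
  finally show ?case by simp
qed

lemma (in group) wv_invw: "wok I (carrier G) x ps w \<Longrightarrow> word_val G x ps (invw w) = inv (word_val G x ps w)"
proof (induction w)
  case Nil then show ?case by (simp add: invw_def)
next
  case (Cons l w)
  obtain v f where l: "l = (v,f)" by (cases l)
  have invc: "invw (l#w) = invw w @ [(v, \<not>f)]" by (simp add: invw_def l)
  have lc: "letter_val G x ps l \<in> carrier G" using Cons.prems by (auto intro: letter_closed)
  have lv: "letter_val G x ps (v, \<not>f) = inv (letter_val G x ps l)"
    using Cons.prems by (cases f) (auto simp: l Let_def split: sum.splits)
  have wc: "wok I (carrier G) x ps w" using Cons.prems by simp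
  have "word_val G x ps (invw (l#w)) = inv (word_val G x ps w) \<otimes> (inv (letter_val G x ps l) \<otimes> \<one>)"
    using Cons wc lc lv invc by (subst invc, subst wv_append) (auto simp: l split: sum.splits)
  also have "\<dots> = inv (letter_val G x ps l \<otimes> word_val G x ps w)"
    using lc wv_closed[OF wc] by (simp add: inv_mult_group)
  finally show ?case by simp
qed

lemma (in group) wv_sub: "subgroup S G \<Longrightarrow> wok I S x ps w \<Longrightarrow> word_val G x ps w \<in> S"
proof (induction w)
  case Nil then show ?case by (simp add: subgroup.one_closed)
next
  case (Cons l w)
  obtain v f where l: "l = (v,f)" by (cases l)
  have "letter_val G x ps l \<in> S" using Cons.prems
    by (auto simp: l Let_def subgroup.m_inv_closed split: sum.splits)
  then show ?case using Cons by (simp add: subgroup.m_closed)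
qed

lemma (in group) wv_consistent: "subgroup S G \<Longrightarrow> wok I S x ps w \<Longrightarrow>
   word_val (G\<lparr>carrier:=S\<rparr>) x ps w = word_val G x ps w"
proof (induction w)
  case Nil then show ?case by simp
next
  case (Cons l w)
  obtain v f where l: "l = (v,f)" by (cases l)
  have "letter_val (G\<lparr>carrier:=S\<rparr>) x ps l = letter_val G x ps l" using Cons.prems
    by (auto simp: l Let_def split: sum.splits)
  then show ?case using Cons by simp
qed

lemma (in group) comm_inv:
  assumes "q \<in> carrier G" "s \<in> carrier G" "q \<otimes> s = s \<otimes> q"
  shows "inv q \<otimes> s = s \<otimes> inv q"
proof -
  have "inv q \<otimes> s = inv q \<otimes> s \<otimes> (q \<otimes> inv q)" using assms by (simp add: m_assoc)
  also have "\<dots> = inv q \<otimes> (s \<otimes> q) \<otimes> inv q" using assms by (simp add: m_assoc)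
  also have "\<dots> = inv q \<otimes> (q \<otimes> s) \<otimes> inv q" using assms(3) by simp
  also have "\<dots> = s \<otimes> inv q" using assms(1,2) by (simp add: m_assoc[symmetric])
  finally show ?thesis .
qed

lemma (in group) wv_decomp:
  assumes "subgroup S G" "wok I S p ps w"
    "\<forall>t\<in>I. q t \<in> carrier G \<and> (\<forall>s\<in>S. q t \<otimes> s = s \<otimes> q t)" "\<forall>t\<in>I. r t = p t \<otimes> q t"
  shows "word_val G r ps w = word_val G p ps w \<otimes> word_val G q ps (dropp w)"
  using assms(2)
proof (induction w)
  case Nil then show ?case by (simp add: dropp_def)
next
  case (Cons l w)
  have SC: "S \<subseteq> carrier G" using assms(1) subgroup.subset by blast
  obtain v f where l: "l = (v,f)" by (cases l)
  have wS: "wok I S p ps w" using Cons.prems by simp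
  define P where "P = word_val G p ps w"
  define Q where "Q = word_val G q ps (dropp w)"
  have PS: "P \<in> S" unfolding P_def using wv_sub[OF assms(1) wS] .
  have PC: "P \<in> carrier G" using PS SC by blast
  have wq: "wok I (carrier G) q ps (dropp w)" using wS assms(3)
    by (auto simp: wok_def dropp_def split: sum.splits)
  have QC: "Q \<in> carrier G" unfolding Q_def using wv_closed[OF wq] .
  have IH: "word_val G r ps w = P \<otimes> Q" using Cons wS P_def Q_def by simp
  show ?case
  proof (cases v)
    case (Inl t)
    have t: "t \<in> I" "p t \<in> S" using Cons.prems by (auto simp: l Inl)
    have pt: "p t \<in> carrier G" using t SC by blast
    have qC: "q t \<in> carrier G" using assms(3) t by auto
    have qcom: "\<And>s. s \<in> S \<Longrightarrow> q t \<otimes> s = s \<otimes> q t" using assms(3) t by auto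
    have dl: "dropp ((Inl t, ff)#w) = (Inl t, ff) # dropp w" for ff by (simp add: dropp_def)
    show ?thesis
    proof (cases f)
      case True
      have XS: "inv p t \<otimes> P \<in> S" using t PS assms(1) by (simp add: subgroup.m_closed subgroup.m_inv_closed)
      have XC: "inv p t \<otimes> P \<in> carrier G" using XS SC by blast
      have qX: "inv q t \<otimes> (inv p t \<otimes> P) = (inv p t \<otimes> P) \<otimes> inv q t"
        using comm_inv[OF qC XC qcom[OF XS]] .
      have "inv (p t \<otimes> q t) \<otimes> (P \<otimes> Q) = (inv q t \<otimes> (inv p t \<otimes> P)) \<otimes> Q"
        using pt qC PC QC by (simp add: inv_mult_group m_assoc)
      also have "\<dots> = ((inv p t \<otimes> P) \<otimes> inv q t) \<otimes> Q" by (simp only: qX)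
      also have "\<dots> = (inv p t \<otimes> P) \<otimes> (inv q t \<otimes> Q)"
        using pt qC PC QC by (simp add: m_assoc)
      finally have eq: "inv (p t \<otimes> q t) \<otimes> (P \<otimes> Q) = (inv p t \<otimes> P) \<otimes> (inv q t \<otimes> Q)" .
      show ?thesis using IH assms(4) t eq
        by (simp add: l Inl True dl P_def Q_def)
    next
      case False
      have "(p t \<otimes> q t) \<otimes> (P \<otimes> Q) = (p t \<otimes> (q t \<otimes> P)) \<otimes> Q"
        using pt qC PC QC by (simp add: m_assoc)
      also have "\<dots> = (p t \<otimes> (P \<otimes> q t)) \<otimes> Q" by (simp only: qcom[OF PS])
      also have "\<dots> = (p t \<otimes> P) \<otimes> (q t \<otimes> Q)"
        using pt qC PC QC by (simp add: m_assoc)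
      finally have eq: "(p t \<otimes> q t) \<otimes> (P \<otimes> Q) = (p t \<otimes> P) \<otimes> (q t \<otimes> Q)" .
      show ?thesis using IH assms(4) t eq
        by (simp add: l Inl False dl P_def Q_def)
    qed
  next
    case (Inr c)
    have c: "ps c \<in> carrier G" using Cons.prems SC by (auto simp: l Inr)
    have dl: "dropp ((Inr c, ff)#w) = dropp w" for ff by (simp add: dropp_def)
    show ?thesis using IH c PC QC by (cases f) (simp_all add: l Inr dl P_def Q_def m_assoc Let_def)
  qed
qed

lemma (in group) wv_gen:
  assumes "\<forall>t\<in>I. q t \<in> C" "subgroup C G" "\<forall>l\<in>set w. case fst l of Inl t \<Rightarrow> t \<in> I | Inr _ \<Rightarrow> True"
  shows "word_val G q ps (dropp w) \<in> generate (G\<lparr>carrier:=C\<rparr>) (q ` I)"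
  using assms(3)
proof (induction w)
  case Nil then show ?case using generate.one[of "G\<lparr>carrier:=C\<rparr>"] by (simp add: dropp_def)
next
  case (Cons l w)
  obtain v f where l: "l = (v,f)" by (cases l)
  show ?case
  proof (cases v)
    case (Inl t)
    have t: "t \<in> I" using Cons.prems by (auto simp: l Inl)
    have "letter_val G q ps l \<in> generate (G\<lparr>carrier:=C\<rparr>) (q ` I)"
      using generate.incl[of "q t" "q ` I" "G\<lparr>carrier:=C\<rparr>"] generate.inv[of "q t" "q ` I" "G\<lparr>carrier:=C\<rparr>"]
        t assms(1,2)
      by (cases f) (auto simp: l Inl)
    then show ?thesis using Cons generate.eng[of _ "G\<lparr>carrier:=C\<rparr>"]
      by (auto simp: dropp_def l Inl)
  next
    case (Inr c)
    then show ?thesis using Cons by (simp add: dropp_def l)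
  qed
qed




locale cstp =
  fixes G :: "nat \<Rightarrow> 'a monoid"
    and I :: "'i set"
    and a :: "'i \<Rightarrow> nat \<Rightarrow> 'a"
  assumes lf: "\<And>n. locally_finite_group (G n)"
    and sub: "\<And>n. subgroup (carrier (G n)) (G (Suc n))"
    and restr: "\<And>n. G n = (G (Suc n))\<lparr>carrier := carrier (G n)\<rparr>"
    and a_in: "\<And>n t. t \<in> I \<Longrightarrow> a t n \<in> carrier (G (Suc n))"
    and alpha: "\<And>n. tp_bs I (carrier (G n)) (G (Suc n)) id (\<lambda>t. a t n)
                   \<subseteq> tp_bs I (carrier (G (Suc n))) (G (Suc (Suc n))) id (\<lambda>t. a t (Suc n))"
    and beta: "\<And>n. generate (G (Suc n)) ((\<lambda>t. a t n) ` I) \<inter> carrier (G n) = {\<one>\<^bsub>G n\<^esub>}"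
    and e: "\<And>n t g. t \<in> I \<Longrightarrow> g \<in> carrier (G n) \<Longrightarrow>
              a t n \<otimes>\<^bsub>G (Suc n)\<^esub> g = g \<otimes>\<^bsub>G (Suc n)\<^esub> a t n"
begin

definition U where "U = (\<Union>n. carrier (G n))"
definition K :: "'a monoid" where "K = \<lparr>carrier = U, monoid.mult = monoid.mult (G 0), one = one (G 0)\<rparr>"

lemma grp: "group (G n)" using lf[of n] by (simp add: locally_finite_group_def)

lemma mult_G: "monoid.mult (G n) = monoid.mult (G 0)"
proof (induction n)
  case (Suc n)
  have "monoid.mult (G n) = monoid.mult (G (Suc n))" using arg_cong[OF restr[of n], of monoid.mult] by simp
  then show ?case using Suc by simp
qed simp

lemma one_G: "one (G n) = one (G 0)"
proof (induction n)
  case (Suc n)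
  have "one (G n) = one (G (Suc n))" using arg_cong[OF restr[of n], of one] by simp
  then show ?case using Suc by simp
qed simp

lemma multK: "monoid.mult K = monoid.mult (G n)" by (simp add: K_def mult_G[of n])
lemma oneK: "one K = one (G n)" by (simp add: K_def one_G[of n])
lemma carrierK: "carrier K = U" by (simp add: K_def)

lemma carrier_mono: "i \<le> j \<Longrightarrow> carrier (G i) \<subseteq> carrier (G j)"
proof (induction j rule: dec_induct)
  case (step j)
  have "carrier (G j) \<subseteq> carrier (G (Suc j))" by (rule subgroup.subset[OF sub[of j]])
  with step(3) show ?case by (rule subset_trans)
qed simp

lemma inU: "x \<in> carrier (G n) \<Longrightarrow> x \<in> U" unfolding U_def by (rule UN_I[OF UNIV_I])

lemma inU_E: "x \<in> U \<Longrightarrow> (\<And>n. x \<in> carrier (G n) \<Longrightarrow> P) \<Longrightarrow> P" unfolding U_def by (erule UN_E)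

lemma U2: "x \<in> U \<Longrightarrow> y \<in> U \<Longrightarrow> \<exists>n. x \<in> carrier (G n) \<and> y \<in> carrier (G n)"
proof -
  assume x: "x \<in> U" and y: "y \<in> U"
  obtain i where i: "x \<in> carrier (G i)" using x by (rule inU_E)
  obtain j where j: "y \<in> carrier (G j)" using y by (rule inU_E)
  have s1: "carrier (G i) \<subseteq> carrier (G (max i j))" by (rule carrier_mono) simp
  have s2: "carrier (G j) \<subseteq> carrier (G (max i j))" by (rule carrier_mono) simp
  have "x \<in> carrier (G (max i j)) \<and> y \<in> carrier (G (max i j))" using i j s1 s2 by blast
  then show ?thesis by (rule exI)
qed

lemma U3: "x \<in> U \<Longrightarrow> y \<in> U \<Longrightarrow> z \<in> U \<Longrightarrow> \<exists>n. x \<in> carrier (G n) \<and> y \<in> carrier (G n) \<and> z \<in> carrier (G n)"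
proof -
  assume x: "x \<in> U" and y: "y \<in> U" and z: "z \<in> U"
  obtain n where n: "x \<in> carrier (G n)" "y \<in> carrier (G n)" using U2[OF x y] by (elim exE conjE)
  obtain k where k: "z \<in> carrier (G k)" using z by (rule inU_E)
  have s1: "carrier (G n) \<subseteq> carrier (G (max n k))" by (rule carrier_mono) simp
  have s2: "carrier (G k) \<subseteq> carrier (G (max n k))" by (rule carrier_mono) simp
  have "x \<in> carrier (G (max n k)) \<and> y \<in> carrier (G (max n k)) \<and> z \<in> carrier (G (max n k))"
    using n k s1 s2 by blast
  then show ?thesis by (rule exI)
qed

lemma finU: "finite A \<Longrightarrow> A \<subseteq> U \<Longrightarrow> \<exists>n. A \<subseteq> carrier (G n)"
proof (induction A rule: finite_induct)
  case (insert x F)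
  have FU: "F \<subseteq> U" using insert.prems by simp
  obtain n where n: "F \<subseteq> carrier (G n)" using insert.IH[OF FU] by (elim exE)
  have xU: "x \<in> U" using insert.prems by simp
  obtain m where m: "x \<in> carrier (G m)" using xU by (rule inU_E)
  have s1: "carrier (G n) \<subseteq> carrier (G (max n m))" by (rule carrier_mono) simp
  have s2: "carrier (G m) \<subseteq> carrier (G (max n m))" by (rule carrier_mono) simp
  have "insert x F \<subseteq> carrier (G (max n m))" using n m s1 s2 by blast
  then show ?case by (rule exI)
qed simp

lemma group_K: "group K"
proof (rule groupI)
  fix x y assume "x \<in> carrier K" "y \<in> carrier K"
  then obtain n where xy: "x \<in> carrier (G n)" "y \<in> carrier (G n)" using U2 by (auto simp: carrierK)
  have "x \<otimes>\<^bsub>G n\<^esub> y \<in> carrier (G n)" by (rule monoid.m_closed[OF group.is_monoid[OF grp[of n]] xy])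
  then have "x \<otimes>\<^bsub>G n\<^esub> y \<in> U" by (rule inU)
  then show "x \<otimes>\<^bsub>K\<^esub> y \<in> carrier K" by (simp only: multK[of n] carrierK)
next
  have "\<one>\<^bsub>G 0\<^esub> \<in> carrier (G 0)" by (rule monoid.one_closed[OF group.is_monoid[OF grp[of 0]]])
  then have "\<one>\<^bsub>G 0\<^esub> \<in> U" by (rule inU)
  then show "\<one>\<^bsub>K\<^esub> \<in> carrier K" by (simp only: oneK[of 0] carrierK)
next
  fix x y z assume "x \<in> carrier K" "y \<in> carrier K" "z \<in> carrier K"
  then obtain n where xyz: "x \<in> carrier (G n)" "y \<in> carrier (G n)" "z \<in> carrier (G n)" using U3[of x y z] by (auto simp: carrierK)
  have "x \<otimes>\<^bsub>G n\<^esub> y \<otimes>\<^bsub>G n\<^esub> z = x \<otimes>\<^bsub>G n\<^esub> (y \<otimes>\<^bsub>G n\<^esub> z)"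
    by (rule monoid.m_assoc[OF group.is_monoid[OF grp[of n]] xyz])
  then show "x \<otimes>\<^bsub>K\<^esub> y \<otimes>\<^bsub>K\<^esub> z = x \<otimes>\<^bsub>K\<^esub> (y \<otimes>\<^bsub>K\<^esub> z)" by (simp only: multK[of n])
next
  fix x assume "x \<in> carrier K"
  then obtain n where x: "x \<in> carrier (G n)" by (auto simp: carrierK U_def)
  have "\<one>\<^bsub>G n\<^esub> \<otimes>\<^bsub>G n\<^esub> x = x" by (rule monoid.l_one[OF group.is_monoid[OF grp[of n]] x])
  then show "\<one>\<^bsub>K\<^esub> \<otimes>\<^bsub>K\<^esub> x = x" by (simp only: multK[of n] oneK[of n])
next
  fix x assume "x \<in> carrier K"
  then obtain n where x: "x \<in> carrier (G n)" by (auto simp: carrierK U_def)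
  have "inv\<^bsub>G n\<^esub> x \<in> carrier (G n)" by (rule group.inv_closed[OF grp[of n] x])
  then have "inv\<^bsub>G n\<^esub> x \<in> U" by (rule inU)
  then have c: "inv\<^bsub>G n\<^esub> x \<in> carrier K" by (simp only: carrierK)
  have "inv\<^bsub>G n\<^esub> x \<otimes>\<^bsub>G n\<^esub> x = \<one>\<^bsub>G n\<^esub>" by (rule group.l_inv[OF grp[of n] x])
  then have "inv\<^bsub>G n\<^esub> x \<otimes>\<^bsub>K\<^esub> x = \<one>\<^bsub>K\<^esub>" by (simp only: multK[of n] oneK[of n])
  with c show "\<exists>y\<in>carrier K. y \<otimes>\<^bsub>K\<^esub> x = \<one>\<^bsub>K\<^esub>" by (rule bexI[rotated])
qed

lemma G_eq: "G n = K\<lparr>carrier := carrier (G n)\<rparr>"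
  by (rule monoid.equality) (simp_all add: K_def mult_G[of n] one_G[of n])

lemma GE: "K\<lparr>carrier := carrier (G n)\<rparr> = G n" by (rule G_eq[symmetric])

lemma subK: "subgroup (carrier (G n)) K"
  apply (rule group.group_incl_imp_subgroup[OF group_K])
  apply (auto simp: carrierK inU)[1]
  apply (simp only: GE grp)
  done

lemma invK: "x \<in> carrier (G n) \<Longrightarrow> inv\<^bsub>G n\<^esub> x = inv\<^bsub>K\<^esub> x"
  using group.m_inv_consistent[OF group_K subK, of x n] by (simp only: GE)

abbreviation bp where "bp m \<equiv> (\<lambda>t. bprod G a t m)"
abbreviation am where "am m \<equiv> (\<lambda>t. a t m)"
definition pp :: "nat \<Rightarrow> 'i \<Rightarrow> 'a" where "pp m = (case m of 0 \<Rightarrow> (\<lambda>_. \<one>\<^bsub>K\<^esub>) | Suc k \<Rightarrow> bp k)"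

lemma bp_in: "t \<in> I \<Longrightarrow> bprod G a t m \<in> carrier (G (Suc m))"
proof (induction m)
  case 0 then show ?case by (simp add: a_in)
next
  case (Suc m)
  have "bprod G a t m \<in> carrier (G (Suc (Suc m)))" using Suc carrier_mono[of "Suc m" "Suc (Suc m)"] by auto
  then show ?case using a_in[OF Suc.prems, of "Suc m"] monoid.m_closed[OF group.is_monoid[OF grp[of "Suc (Suc m)"]]]
    by simp
qed

lemma pp_in: "t \<in> I \<Longrightarrow> pp m t \<in> carrier (G m)"
proof (cases m)
  case 0
  then show ?thesis using monoid.one_closed[OF group.is_monoid[OF grp[of 0]]] by (simp add: pp_def oneK[of 0])
next
  case (Suc k)
  then show "t \<in> I \<Longrightarrow> ?thesis" by (simp add: pp_def bp_in)
qed

lemma bp_split: "t \<in> I \<Longrightarrow> bprod G a t m = pp m t \<otimes>\<^bsub>K\<^esub> a t m"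
proof (cases m)
  case 0
  assume t: "t \<in> I"
  have "a t 0 \<in> carrier K" using a_in[OF t, of 0] by (simp add: carrierK inU)
  then show ?thesis using monoid.l_one[OF group.is_monoid[OF group_K]] 0 by (simp add: pp_def)
next
  case (Suc k)
  then show ?thesis by (simp add: pp_def multK[of "Suc (Suc k)"])
qed

definition good where "good n w \<longleftrightarrow> (\<forall>l\<in>set w. case fst l of Inl t \<Rightarrow> t \<in> I | Inr c \<Rightarrow> c \<in> carrier (G n))"

lemma good_wok: "good n w \<Longrightarrow> carrier (G n) \<subseteq> S \<Longrightarrow> (\<forall>t\<in>I. x t \<in> S) \<Longrightarrow> wok I S x id w"
  by (auto simp: good_def wok_def split: sum.splits)

lemma good_mono: "good n w \<Longrightarrow> n \<le> m \<Longrightarrow> good m w"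
  using carrier_mono[of n m] by (fastforce simp: good_def split: sum.splits)

definition wv where "wv m w = word_val K (bp m) id w"

lemma genC: "generate (G (Suc m)) (am m ` I) \<subseteq> carrier (G (Suc m))"
  by (rule group.generate_incl[OF grp]) (auto simp: a_in)

lemma dec:
  assumes "good m w"
  shows "wv m w = word_val K (pp m) id w \<otimes>\<^bsub>K\<^esub> word_val K (am m) id (dropp w)"
    "word_val K (pp m) id w \<in> carrier (G m)"
    "word_val K (am m) id (dropp w) \<in> generate (G (Suc m)) (am m ` I)"
proof -
  interpret K: group K by (rule group_K)
  have w1: "wok I (carrier (G m)) (pp m) id w" using assms by (rule good_wok) (auto simp: pp_in)
  have c1: "\<forall>t\<in>I. a t m \<in> carrier K \<and> (\<forall>s\<in>carrier (G m). a t m \<otimes>\<^bsub>K\<^esub> s = s \<otimes>\<^bsub>K\<^esub> a t m)"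
  proof (intro ballI conjI)
    fix t assume t: "t \<in> I"
    show "a t m \<in> carrier K" using inU[OF a_in[OF t]] by (simp add: carrierK)
    fix s assume s: "s \<in> carrier (G m)"
    show "a t m \<otimes>\<^bsub>K\<^esub> s = s \<otimes>\<^bsub>K\<^esub> a t m"
      using e[OF t s] by (simp add: multK[of "Suc m"])
  qed
  have c2: "\<forall>t\<in>I. bprod G a t m = pp m t \<otimes>\<^bsub>K\<^esub> a t m" using bp_split by auto
  show "wv m w = word_val K (pp m) id w \<otimes>\<^bsub>K\<^esub> word_val K (am m) id (dropp w)"
    unfolding wv_def by (rule K.wv_decomp[OF subK w1 c1 c2])
  show "word_val K (pp m) id w \<in> carrier (G m)" by (rule K.wv_sub[OF subK w1])
  have vv: "\<forall>l\<in>set w. case fst l of Inl t \<Rightarrow> t \<in> I | Inr _ \<Rightarrow> True"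
    using assms by (auto simp: good_def split: sum.splits)
  have qC: "\<forall>t\<in>I. a t m \<in> carrier (G (Suc m))" using a_in by auto
  have "word_val K (am m) id (dropp w) \<in> generate (K\<lparr>carrier := carrier (G (Suc m))\<rparr>) (am m ` I)"
    by (rule K.wv_gen[OF qC subK vv])
  then show "word_val K (am m) id (dropp w) \<in> generate (G (Suc m)) (am m ` I)" by (simp only: GE)
qed

lemma XY:
  assumes X: "xx \<in> carrier (G m)" and Y: "yy \<in> generate (G (Suc m)) (am m ` I)"
  shows "xx \<otimes>\<^bsub>K\<^esub> yy = \<one>\<^bsub>K\<^esub> \<longleftrightarrow> xx = \<one>\<^bsub>K\<^esub> \<and> yy = \<one>\<^bsub>K\<^esub>"
proof -
  interpret K: group K by (rule group_K)
  have YC: "yy \<in> carrier (G (Suc m))" using Y genC by blast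
  have XK: "xx \<in> carrier K" "yy \<in> carrier K" using inU[OF X] inU[OF YC] by (auto simp: carrierK)
  show ?thesis
  proof
    assume XY1: "xx \<otimes>\<^bsub>K\<^esub> yy = \<one>\<^bsub>K\<^esub>"
    then have "yy \<otimes>\<^bsub>K\<^esub> xx = \<one>\<^bsub>K\<^esub>" using XK K.inv_comm by blast
    then have "inv\<^bsub>K\<^esub> xx = yy" using XK K.inv_equality by blast
    moreover have "inv\<^bsub>K\<^esub> xx \<in> carrier (G m)" using subgroup.m_inv_closed[OF subK X] .
    ultimately have "yy \<in> carrier (G m)" by simp
    then have "yy = \<one>\<^bsub>G m\<^esub>" using beta[of m] Y by blast
    then have Y1: "yy = \<one>\<^bsub>K\<^esub>" by (simp add: oneK[of m])
    then show "xx = \<one>\<^bsub>K\<^esub> \<and> yy = \<one>\<^bsub>K\<^esub>" using XY1 XK by simp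
  next
    assume "xx = \<one>\<^bsub>K\<^esub> \<and> yy = \<one>\<^bsub>K\<^esub>" then show "xx \<otimes>\<^bsub>K\<^esub> yy = \<one>\<^bsub>K\<^esub>" by simp
  qed
qed

lemma P_lem: "good m w \<Longrightarrow> wv m w = \<one>\<^bsub>K\<^esub> \<Longrightarrow> word_val K (am m) id (dropp w) = \<one>\<^bsub>K\<^esub>"
  using XY[OF dec(2) dec(3)] dec(1) by metis

lemma alpha_step:
  assumes g: "good m w" and h1: "word_val K (am m) id (dropp w) = \<one>\<^bsub>K\<^esub>"
  shows "word_val K (am (Suc m)) id (dropp w) = \<one>\<^bsub>K\<^esub>"
proof -
  interpret K: group K by (rule group_K)
  have vars: "word_vars (dropp w) \<subseteq> I" using g
    by (auto simp: good_def word_vars_def dropp_def split: sum.splits)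
  have pars: "word_params (dropp w) \<subseteq> carrier (G m)" by (auto simp: word_params_def dropp_def)
  have wk: "\<And>k. wok I (carrier (G (Suc k))) (am k) id (dropp w)" using g a_in
    by (auto simp: good_def wok_def dropp_def split: sum.splits)
  have c1: "word_val (G (Suc m)) (am m) id (dropp w) = word_val K (am m) id (dropp w)"
    using K.wv_consistent[OF subK wk[of m]] by (simp only: GE)
  have c2: "word_val (G (Suc (Suc m))) (am (Suc m)) id (dropp w) = word_val K (am (Suc m)) id (dropp w)"
    using K.wv_consistent[OF subK wk[of "Suc m"]] by (simp only: GE)
  have "(True, dropp w) \<in> tp_bs I (carrier (G m)) (G (Suc m)) id (am m)"
    using vars pars h1 c1 by (simp add: tp_bs_def oneK[of "Suc m"])
  then have "(True, dropp w) \<in> tp_bs I (carrier (G (Suc m))) (G (Suc (Suc m))) id (am (Suc m))"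
    using alpha by blast
  then show ?thesis using c2 by (simp add: tp_bs_def oneK[of "Suc (Suc m)"])
qed

lemma stab_step:
  assumes g: "good m w"
  shows "wv (Suc m) w = \<one>\<^bsub>K\<^esub> \<longleftrightarrow> wv m w = \<one>\<^bsub>K\<^esub>"
proof -
  have g': "good (Suc m) w" by (rule good_mono[OF g]) simp
  have pps: "word_val K (pp (Suc m)) id w = wv m w" by (simp add: pp_def wv_def)
  have d: "wv (Suc m) w = wv m w \<otimes>\<^bsub>K\<^esub> word_val K (am (Suc m)) id (dropp w)"
    using dec(1)[OF g'] pps by simp
  have xy: "wv (Suc m) w = \<one>\<^bsub>K\<^esub> \<longleftrightarrow> wv m w = \<one>\<^bsub>K\<^esub> \<and> word_val K (am (Suc m)) id (dropp w) = \<one>\<^bsub>K\<^esub>"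
    using XY[OF dec(2)[OF g'] dec(3)[OF g']] pps d by simp
  show ?thesis using xy P_lem[OF g] alpha_step[OF g] by blast
qed

lemma stab:
  assumes g: "good n w" and nm: "n \<le> m"
  shows "wv m w = \<one>\<^bsub>K\<^esub> \<longleftrightarrow> wv n w = \<one>\<^bsub>K\<^esub>"
  using nm
proof (induction m rule: dec_induct)
  case base then show ?case by simp
next
  case (step m)
  then show ?case using stab_step[OF good_mono[OF g step(1)]] by simp
qed

lemma ev_stab:
  assumes h: "\<And>m. m \<ge> n \<Longrightarrow> P m \<longleftrightarrow> P n"
  shows "eventually P sequentially \<longleftrightarrow> P n"
proof
  assume "eventually P sequentially"
  then obtain N where N: "\<forall>m\<ge>N. P m" by (auto simp: eventually_sequentially)
  then have "P (max N n)" by simp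
  then show "P n" using h[of "max N n"] by simp
next
  assume "P n"
  then show "eventually P sequentially" using h unfolding eventually_sequentially by blast
qed

end



context cstp begin

definition val :: "nat \<Rightarrow> 'a + 'i \<Rightarrow> 'a" where "val m c = (case c of Inl g \<Rightarrow> g | Inr t \<Rightarrow> bprod G a t m)"
definition tow :: "('a + 'i) list \<Rightarrow> ('i, 'a) gword" where
  "tow l = map (\<lambda>c. (case c of Inl g \<Rightarrow> Inr g | Inr t \<Rightarrow> Inl t, False)) l"
definition ev where "ev m l = wv m (tow l)"
definition LL where "LL = {l. \<forall>c\<in>set l. case c of Inl g \<Rightarrow> g \<in> U | Inr t \<Rightarrow> t \<in> I}"
definition lgood where "lgood n l \<longleftrightarrow> (\<forall>c\<in>set l. case c of Inl g \<Rightarrow> g \<in> carrier (G n) | Inr t \<Rightarrow> t \<in> I)"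

lemma bpU: "t \<in> I \<Longrightarrow> bprod G a t m \<in> U" by (rule inU[OF bp_in])

lemma good_tow: "good n (tow l) = lgood n l"
  by (auto simp: good_def lgood_def tow_def split: sum.splits)

lemma ev_Nil[simp]: "ev m [] = \<one>\<^bsub>K\<^esub>" by (simp add: ev_def wv_def tow_def)

lemma ev_Cons: "ev m (c # l) = val m c \<otimes>\<^bsub>K\<^esub> ev m l"
  by (cases c) (simp_all add: ev_def wv_def tow_def val_def)

lemma LL_Cons[simp]: "c # l \<in> LL \<longleftrightarrow> (case c of Inl g \<Rightarrow> g \<in> U | Inr t \<Rightarrow> t \<in> I) \<and> l \<in> LL"
  by (simp add: LL_def)
lemma LL_Nil[simp]: "[] \<in> LL" by (simp add: LL_def)
lemma LL_append[simp]: "l1 @ l2 \<in> LL \<longleftrightarrow> l1 \<in> LL \<and> l2 \<in> LL" by (auto simp: LL_def)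

lemma val_in: "(case c of Inl g \<Rightarrow> g \<in> U | Inr t \<Rightarrow> t \<in> I) \<Longrightarrow> val m c \<in> carrier K"
  using bpU by (auto simp: val_def carrierK split: sum.splits)

lemma ev_in: "l \<in> LL \<Longrightarrow> ev m l \<in> carrier K"
proof (induction l)
  case Nil then show ?case using monoid.one_closed[OF group.is_monoid[OF group_K]] by simp
next
  case (Cons c l)
  then show ?case using val_in[of c m] monoid.m_closed[OF group.is_monoid[OF group_K]] by (simp add: ev_Cons)
qed

lemma ev_append: "l1 \<in> LL \<Longrightarrow> l2 \<in> LL \<Longrightarrow> ev m (l1 @ l2) = ev m l1 \<otimes>\<^bsub>K\<^esub> ev m l2"
proof (induction l1)
  case Nil then show ?case using monoid.l_one[OF group.is_monoid[OF group_K]] ev_in by simp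
next
  case (Cons c l)
  then show ?case using val_in[of c m] ev_in[of l m] ev_in[of l2 m] monoid.m_assoc[OF group.is_monoid[OF group_K]]
    by (simp add: ev_Cons)
qed

lemma lgood_LL: "lgood n l \<Longrightarrow> l \<in> LL" by (auto simp: lgood_def LL_def inU split: sum.splits)

lemma lgood_mono: "lgood n l \<Longrightarrow> n \<le> m \<Longrightarrow> lgood m l"
  using carrier_mono[of n m] by (fastforce simp: lgood_def split: sum.splits)

lemma LL_lgood: "l \<in> LL \<Longrightarrow> \<exists>n. lgood n l"
proof -
  assume l: "l \<in> LL"
  have fin: "finite (Inl -` set l)" by (rule finite_vimageI) (auto simp: inj_on_def)
  have "Inl -` set l \<subseteq> U" using l by (force simp: LL_def)
  then obtain n where "Inl -` set l \<subseteq> carrier (G n)" using finU[OF fin] by blast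
  then have "lgood n l" using l by (force simp: lgood_def LL_def split: sum.splits)
  then show ?thesis by blast
qed

definition eqv where "eqv l l' \<longleftrightarrow> eventually (\<lambda>m. ev m l = ev m l') sequentially"

lemma eqv_refl: "eqv l l" by (simp add: eqv_def)
lemma eqv_sym: "eqv l l' \<Longrightarrow> eqv l' l" by (simp add: eqv_def eq_commute)
lemma eqv_trans: "eqv l l' \<Longrightarrow> eqv l' l'' \<Longrightarrow> eqv l l''"
  unfolding eqv_def by (auto elim: eventually_elim2)

lemma eqv_char:
  assumes "lgood n l" "lgood n l'"
  shows "eqv l l' \<longleftrightarrow> ev n l = ev n l'"
proof -
  interpret K: group K by (rule group_K)
  define w where "w = tow l @ invw (tow l')"
  have gw: "good n w" using assms
    by (auto simp: w_def good_tow[symmetric] good_def invw_def)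
  have CK: "carrier (G n) \<subseteq> carrier K" by (auto simp: carrierK inU)
  have bK: "\<forall>t\<in>I. bprod G a t m \<in> carrier K" for m using bpU by (auto simp: carrierK)
  have wk: "wok I (carrier K) (bp m) id (tow l)" "wok I (carrier K) (bp m) id (tow l')" for m
    using good_wok[OF _ CK bK] assms by (auto simp: good_tow)
  have key: "ev m l = ev m l' \<longleftrightarrow> wv m w = \<one>\<^bsub>K\<^esub>" for m
  proof -
    have e1: "wv m w = ev m l \<otimes>\<^bsub>K\<^esub> inv\<^bsub>K\<^esub> ev m l'"
      unfolding w_def wv_def ev_def using wk[of m]
      by (simp add: K.wv_append K.wv_invw)
    have c: "ev m l \<in> carrier K" "ev m l' \<in> carrier K"
      unfolding ev_def wv_def using wk[of m] by (auto intro: K.wv_closed)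
    show ?thesis
    proof
      assume "ev m l = ev m l'" then show "wv m w = \<one>\<^bsub>K\<^esub>" using e1 c by simp
    next
      assume "wv m w = \<one>\<^bsub>K\<^esub>"
      then have "ev m l \<otimes>\<^bsub>K\<^esub> inv\<^bsub>K\<^esub> ev m l' = \<one>\<^bsub>K\<^esub>" using e1 by simp
      then have "inv\<^bsub>K\<^esub> (inv\<^bsub>K\<^esub> ev m l') = ev m l" using c K.inv_equality by blast
      then show "ev m l = ev m l'" using c by simp
    qed
  qed
  have "eqv l l' \<longleftrightarrow> eventually (\<lambda>m. wv m w = \<one>\<^bsub>K\<^esub>) sequentially" unfolding eqv_def key ..
  also have "\<dots> \<longleftrightarrow> wv n w = \<one>\<^bsub>K\<^esub>" by (rule ev_stab) (rule stab[OF gw])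
  also have "\<dots> \<longleftrightarrow> ev n l = ev n l'" using key by simp
  finally show ?thesis .
qed

definition rep where "rep l = (SOME l'. l' \<in> LL \<and> eqv l' l)"

lemma rep: "l \<in> LL \<Longrightarrow> rep l \<in> LL \<and> eqv (rep l) l"
  unfolding rep_def by (rule someI[of _ l]) (simp add: eqv_refl)

lemma rep_cong: "eqv l l' \<Longrightarrow> rep l = rep l'"
proof -
  assume h: "eqv l l'"
  have "(\<lambda>l''. l'' \<in> LL \<and> eqv l'' l) = (\<lambda>l''. l'' \<in> LL \<and> eqv l'' l')"
    using h eqv_trans eqv_sym by (intro ext) blast
  then show ?thesis by (simp add: rep_def)
qed

lemma rep_eq_iff:
  assumes "l \<in> LL" "l' \<in> LL" shows "rep l = rep l' \<longleftrightarrow> eqv l l'"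
proof
  assume h: "rep l = rep l'"
  have e1: "eqv l (rep l)" using rep[OF assms(1)] eqv_sym by blast
  have e2: "eqv (rep l') l'" using rep[OF assms(2)] by blast
  have "eqv l (rep l')" using e1 h by simp
  then show "eqv l l'" using e2 by (rule eqv_trans)
next
  assume "eqv l l'" then show "rep l = rep l'" by (rule rep_cong)
qed

definition HH :: "('a + 'i) list monoid" where
  "HH = \<lparr>carrier = rep ` LL, monoid.mult = (\<lambda>x y. rep (x @ y)), one = rep []\<rparr>"

lemma HH_simps: "carrier HH = rep ` LL" "x \<otimes>\<^bsub>HH\<^esub> y = rep (x @ y)" "\<one>\<^bsub>HH\<^esub> = rep []"
  by (simp_all add: HH_def)

lemma carrierH: "x \<in> carrier HH \<Longrightarrow> x \<in> LL \<and> rep x = x"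
proof -
  assume "x \<in> carrier HH"
  then obtain l where l: "l \<in> LL" "x = rep l" by (auto simp: HH_def)
  have r: "rep l \<in> LL" "eqv (rep l) l" using rep[OF l(1)] by auto
  have "rep (rep l) = rep l" by (rule rep_cong[OF r(2)])
  then show ?thesis using r l(2) by simp
qed

lemma rep_in: "l \<in> LL \<Longrightarrow> rep l \<in> carrier HH" by (simp add: HH_def)

lemma eqv_app: "eqv l1 l1' \<Longrightarrow> eqv l2 l2' \<Longrightarrow> l1 \<in> LL \<Longrightarrow> l1' \<in> LL \<Longrightarrow> l2 \<in> LL \<Longrightarrow> l2' \<in> LL
   \<Longrightarrow> eqv (l1 @ l2) (l1' @ l2')"
  unfolding eqv_def by (auto elim: eventually_elim2 simp: ev_append)

lemma rep_app: "l1 \<in> LL \<Longrightarrow> l2 \<in> LL \<Longrightarrow> rep (rep l1 @ rep l2) = rep (l1 @ l2)"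
  by (rule rep_cong, rule eqv_app) (use rep in auto)

lemma pow_order:
  assumes x: "x \<in> carrier (G j)"
  shows "\<exists>k>0. x [^]\<^bsub>K\<^esub> (k::nat) = \<one>\<^bsub>K\<^esub>"
proof -
  interpret K: group K by (rule group_K)
  have xK: "x \<in> carrier K" using x by (simp add: carrierK inU)
  have fin: "finite (generate (G j) {x})" using lf[of j] x by (simp add: locally_finite_group_def)
  have pw: "x [^]\<^bsub>K\<^esub> (i::nat) \<in> generate (G j) {x}" for i
  proof (induction i)
    case 0 show ?case using generate.one[of "G j" "{x}"] by (simp add: oneK[of j])
  next
    case (Suc i) then show ?case using generate.eng[OF Suc generate.incl[of x "{x}" "G j"]]
      by (simp add: multK[of j])
  qed
  have "\<not> inj (\<lambda>i::nat. x [^]\<^bsub>K\<^esub> i)"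
  proof
    assume "inj (\<lambda>i::nat. x [^]\<^bsub>K\<^esub> i)"
    then have "infinite (range (\<lambda>i::nat. x [^]\<^bsub>K\<^esub> i))" using finite_imageD infinite_UNIV_nat by blast
    moreover have "range (\<lambda>i::nat. x [^]\<^bsub>K\<^esub> i) \<subseteq> generate (G j) {x}" using pw by blast
    ultimately show False using fin finite_subset by blast
  qed
  then obtain i i' where ii: "i \<noteq> i'" "x [^]\<^bsub>K\<^esub> (i::nat) = x [^]\<^bsub>K\<^esub> (i'::nat)" unfolding inj_def by blast
  have "\<exists>p q::nat. p < q \<and> x [^]\<^bsub>K\<^esub> p = x [^]\<^bsub>K\<^esub> q"
  proof (cases "i < i'")
    case True then show ?thesis using ii(2) by blast
  next
    case False then have "i' < i" using ii(1) by simp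
    then show ?thesis using ii(2) by (intro exI[of _ i'] exI[of _ i]) simp
  qed
  then obtain p q where pq: "p < q" "x [^]\<^bsub>K\<^esub> (p::nat) = x [^]\<^bsub>K\<^esub> (q::nat)" by blast
  have h: "x [^]\<^bsub>K\<^esub> p \<otimes>\<^bsub>K\<^esub> x [^]\<^bsub>K\<^esub> (q - p) = x [^]\<^bsub>K\<^esub> q"
    using pq(1) K.nat_pow_mult[OF xK, of p "q-p"] by simp
  have "x [^]\<^bsub>K\<^esub> p \<otimes>\<^bsub>K\<^esub> x [^]\<^bsub>K\<^esub> (q - p) = x [^]\<^bsub>K\<^esub> p"
    by (simp only: h pq(2)[symmetric])
  then have "x [^]\<^bsub>K\<^esub> (q - p) = \<one>\<^bsub>K\<^esub>" using xK by simp
  then show ?thesis using pq(1) by (intro exI[of _ "q-p"]) simp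
qed

lemma ev_pow: "l \<in> LL \<Longrightarrow> ev m (concat (replicate k l)) = ev m l [^]\<^bsub>K\<^esub> k"
proof (induction k)
  case 0 then show ?case by simp
next
  case (Suc k)
  have c: "concat (replicate k l) \<in> LL" using Suc.prems by (auto simp: LL_def)
  have "ev m (concat (replicate (Suc k) l)) = ev m l \<otimes>\<^bsub>K\<^esub> ev m (concat (replicate k l))"
    using ev_append[OF Suc.prems c] by simp
  also have "\<dots> = ev m l \<otimes>\<^bsub>K\<^esub> ev m l [^]\<^bsub>K\<^esub> k" using Suc.IH[OF Suc.prems] by simp
  also have "\<dots> = ev m l [^]\<^bsub>K\<^esub> Suc k"
    by (rule monoid.nat_pow_Suc2[OF group.is_monoid[OF group_K] ev_in[OF Suc.prems], symmetric])
  finally show ?case .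
qed

lemma inv_ex: "l \<in> LL \<Longrightarrow> \<exists>y. y \<in> LL \<and> set y \<subseteq> set l \<and> eqv (y @ l) []"
proof -
  interpret K: group K by (rule group_K)
  assume l: "l \<in> LL"
  obtain n where n: "lgood n l" using LL_lgood l by blast
  have CS: "carrier (G n) \<subseteq> carrier (G (Suc n))" by (rule carrier_mono) simp
  have wk: "wok I (carrier (G (Suc n))) (bp n) id (tow l)"
    using good_wok[OF _ CS] n bp_in by (auto simp: good_tow)
  have "ev n l \<in> carrier (G (Suc n))" unfolding ev_def wv_def by (rule K.wv_sub[OF subK wk])
  from pow_order[OF this] obtain k :: nat where k: "k > 0" "ev n l [^]\<^bsub>K\<^esub> k = \<one>\<^bsub>K\<^esub>" by blast
  obtain k' where k': "k = Suc k'" using k(1) by (cases k) auto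
  define y where "y = concat (replicate k' l)"
  have yl: "y @ l = concat (replicate k l)" unfolding y_def k' by (induction k') auto
  have lg: "lgood n (concat (replicate j l))" for j using n by (auto simp: lgood_def)
  have lgk: "lgood n (concat (replicate k l))" by (rule lg)
  have lg0: "lgood n []" by (simp add: lgood_def)
  have "eqv (concat (replicate k l)) [] \<longleftrightarrow> ev n (concat (replicate k l)) = ev n []"
    by (rule eqv_char[OF lgk lg0])
  then have "eqv (y @ l) []" unfolding yl using ev_pow[OF l, of n k] k(2) by simp
  moreover have "y \<in> LL" "set y \<subseteq> set l" using l by (auto simp: y_def LL_def)
  ultimately show ?thesis by blast
qed

lemma group_HH: "group HH"
proof (rule groupI)
  fix x y assume "x \<in> carrier HH" "y \<in> carrier HH"
  then have "x \<in> LL" "y \<in> LL" using carrierH by blast+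
  then have "x @ y \<in> LL" by simp
  then show "x \<otimes>\<^bsub>HH\<^esub> y \<in> carrier HH" unfolding HH_simps(2) by (rule rep_in)
next
  show "\<one>\<^bsub>HH\<^esub> \<in> carrier HH" unfolding HH_simps(3) by (rule rep_in) simp
next
  fix x y z assume h: "x \<in> carrier HH" "y \<in> carrier HH" "z \<in> carrier HH"
  then have L: "x \<in> LL" "y \<in> LL" "z \<in> LL" using carrierH by blast+
  have xy: "x @ y \<in> LL" "y @ z \<in> LL" using L by simp_all
  have r1: "rep (x@y) \<in> LL" "eqv (rep (x@y)) (x@y)" using rep[OF xy(1)] by blast+
  have r2: "rep (y@z) \<in> LL" "eqv (rep (y@z)) (y@z)" using rep[OF xy(2)] by blast+
  have e1: "eqv (rep (x@y) @ z) ((x@y)@z)" by (rule eqv_app[OF r1(2) eqv_refl r1(1) xy(1) L(3) L(3)])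
  have e2: "eqv (x @ rep (y@z)) (x @ (y@z))" by (rule eqv_app[OF eqv_refl r2(2) L(1) L(1) r2(1) xy(2)])
  have "eqv (rep (x@y) @ z) (x @ rep (y@z))" using eqv_trans[OF e1[unfolded append_assoc] eqv_sym[OF e2]] .
  then have "rep (rep (x@y) @ z) = rep (x @ rep (y@z))" by (rule rep_cong)
  then show "x \<otimes>\<^bsub>HH\<^esub> y \<otimes>\<^bsub>HH\<^esub> z = x \<otimes>\<^bsub>HH\<^esub> (y \<otimes>\<^bsub>HH\<^esub> z)" by (simp only: HH_simps)
next
  fix x assume h: "x \<in> carrier HH"
  then have L: "x \<in> LL" "rep x = x" using carrierH by blast+
  have r: "rep [] \<in> LL" "eqv (rep []) []" using rep[of "[]"] by simp_all
  have "eqv (rep [] @ x) ([] @ x)" by (rule eqv_app[OF r(2) eqv_refl r(1) _ L(1) L(1)]) simp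
  then have "rep (rep [] @ x) = rep ([] @ x)" by (rule rep_cong)
  then show "\<one>\<^bsub>HH\<^esub> \<otimes>\<^bsub>HH\<^esub> x = x" using L(2) by (simp only: HH_simps append_Nil)
next
  fix x assume h: "x \<in> carrier HH"
  then have L: "x \<in> LL" "rep x = x" using carrierH by blast+
  obtain y where y: "y \<in> LL" "eqv (y @ x) []" using inv_ex[OF L(1)] by blast
  have r: "rep y \<in> LL" "eqv (rep y) y" using rep[OF y(1)] by blast+
  have "eqv (rep y @ x) (y @ x)" by (rule eqv_app[OF r(2) eqv_refl r(1) y(1) L(1) L(1)])
  then have "rep (rep y @ x) = rep []" by (rule rep_cong[OF eqv_trans[OF _ y(2)]])
  then have "rep y \<otimes>\<^bsub>HH\<^esub> x = \<one>\<^bsub>HH\<^esub>" by (simp only: HH_simps)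
  then show "\<exists>y\<in>carrier HH. y \<otimes>\<^bsub>HH\<^esub> x = \<one>\<^bsub>HH\<^esub>" using rep_in[OF y(1)] by blast
qed

end



context cstp begin

definition hh where "hh g = rep [Inl g]"
definition bb where "bb t = rep [Inr t]"

lemma hh_in: "g \<in> U \<Longrightarrow> hh g \<in> carrier HH" by (simp add: hh_def rep_in)
lemma bb_in: "t \<in> I \<Longrightarrow> bb t \<in> carrier HH" by (simp add: bb_def rep_in)

lemma ev_rep: "l \<in> LL \<Longrightarrow> eventually (\<lambda>m. ev m (rep l) = ev m l) sequentially"
  using rep eqv_def by blast

lemma ev_mult: "x \<in> carrier HH \<Longrightarrow> y \<in> carrier HH \<Longrightarrow>
   eventually (\<lambda>m. ev m (x \<otimes>\<^bsub>HH\<^esub> y) = ev m x \<otimes>\<^bsub>K\<^esub> ev m y) sequentially"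
proof -
  assume h: "x \<in> carrier HH" "y \<in> carrier HH"
  then have L: "x \<in> LL" "y \<in> LL" using carrierH by blast+
  have "eventually (\<lambda>m. ev m (rep (x@y)) = ev m (x@y)) sequentially" by (rule ev_rep) (simp add: L)
  then show ?thesis by eventually_elim (simp add: HH_simps ev_append L)
qed

lemma ev_inv: "x \<in> carrier HH \<Longrightarrow> eventually (\<lambda>m. ev m (inv\<^bsub>HH\<^esub> x) = inv\<^bsub>K\<^esub> (ev m x)) sequentially"
proof -
  interpret K: group K by (rule group_K)
  interpret H: group HH by (rule group_HH)
  assume x: "x \<in> carrier HH"
  have ix: "inv\<^bsub>HH\<^esub> x \<in> carrier HH" using x by simp
  have L: "x \<in> LL" "inv\<^bsub>HH\<^esub> x \<in> LL" using x ix carrierH by blast+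
  have "x \<otimes>\<^bsub>HH\<^esub> inv\<^bsub>HH\<^esub> x = \<one>\<^bsub>HH\<^esub>" using x by simp
  then have "rep (x @ inv\<^bsub>HH\<^esub> x) = rep []" by (simp only: HH_simps)
  then have "eqv (x @ inv\<^bsub>HH\<^esub> x) []" using rep_eq_iff L by simp
  then have ev: "eventually (\<lambda>m. ev m x \<otimes>\<^bsub>K\<^esub> ev m (inv\<^bsub>HH\<^esub> x) = \<one>\<^bsub>K\<^esub>) sequentially"
    unfolding eqv_def using ev_append[OF L] by simp
  show ?thesis
  proof (rule eventually_mono[OF ev])
    fix m assume h: "ev m x \<otimes>\<^bsub>K\<^esub> ev m (inv\<^bsub>HH\<^esub> x) = \<one>\<^bsub>K\<^esub>"
    have c: "ev m x \<in> carrier K" "ev m (inv\<^bsub>HH\<^esub> x) \<in> carrier K" using ev_in L by blast+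
    then have "ev m (inv\<^bsub>HH\<^esub> x) \<otimes>\<^bsub>K\<^esub> ev m x = \<one>\<^bsub>K\<^esub>" using h K.inv_comm by blast
    then show "ev m (inv\<^bsub>HH\<^esub> x) = inv\<^bsub>K\<^esub> (ev m x)" using c K.inv_equality by simp
  qed
qed

lemma ev_single: "(case c of Inl g \<Rightarrow> g \<in> U | Inr t \<Rightarrow> t \<in> I) \<Longrightarrow> ev m [c] = val m c"
  using val_in[of c m] monoid.r_one[OF group.is_monoid[OF group_K]] by (simp add: ev_Cons)

lemma letter_H:
  assumes "good n [l]"
  shows "letter_val HH bb hh l \<in> carrier HH \<and>
    eventually (\<lambda>m. ev m (letter_val HH bb hh l) = letter_val K (bp m) id l) sequentially"
proof -
  interpret H: group HH by (rule group_HH)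
  obtain v f where l: "l = (v, f)" by (cases l)
  define c where "c = (case v of Inl t \<Rightarrow> Inr t | Inr g \<Rightarrow> Inl g)"
  have c1: "letter_val HH bb hh l = (if f then inv\<^bsub>HH\<^esub> (rep [c]) else rep [c])"
    by (cases v) (simp_all add: l c_def bb_def hh_def Let_def)
  have c2: "letter_val K (bp m) id l = (if f then inv\<^bsub>K\<^esub> (val m c) else val m c)" for m
    by (cases v) (simp_all add: l c_def val_def Let_def)
  have c3: "case c of Inl g \<Rightarrow> g \<in> U | Inr t \<Rightarrow> t \<in> I" using assms
    by (cases v) (auto simp: l c_def good_def intro: inU)
  have cL: "[c] \<in> LL" using c3 by simp
  have base: "eventually (\<lambda>m. ev m (rep [c]) = val m c) sequentially"
    using ev_rep[OF cL] ev_single[OF c3] by simp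
  have rc: "rep [c] \<in> carrier HH" by (rule rep_in[OF cL])
  show ?thesis
  proof (cases f)
    case True
    have "eventually (\<lambda>m. ev m (inv\<^bsub>HH\<^esub> (rep [c])) = inv\<^bsub>K\<^esub> (val m c)) sequentially"
      using ev_inv[OF rc] base by eventually_elim simp
    then show ?thesis using c1 c2 True rc by simp
  next
    case False
    then show ?thesis using c1 c2 base rc by simp
  qed
qed

lemma ev_word: "good n w \<Longrightarrow> word_val HH bb hh w \<in> carrier HH \<and>
    eventually (\<lambda>m. ev m (word_val HH bb hh w) = wv m w) sequentially"
proof (induction w)
  case Nil
  have "eventually (\<lambda>m. ev m (rep []) = ev m []) sequentially" by (rule ev_rep) simp
  then show ?case by (simp add: HH_simps rep_in wv_def)
next
  case (Cons l w)
  have g: "good n [l]" "good n w" using Cons.prems by (auto simp: good_def)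
  note lh = letter_H[OF g(1)]
  note wh = Cons.IH[OF g(2)]
  interpret H: group HH by (rule group_HH)
  have e1: "eventually (\<lambda>m. ev m (letter_val HH bb hh l \<otimes>\<^bsub>HH\<^esub> word_val HH bb hh w)
      = ev m (letter_val HH bb hh l) \<otimes>\<^bsub>K\<^esub> ev m (word_val HH bb hh w)) sequentially"
    using lh wh by (intro ev_mult) blast+
  have e2: "eventually (\<lambda>m. ev m (letter_val HH bb hh l) = letter_val K (bp m) id l) sequentially"
    using lh by blast
  have e3: "eventually (\<lambda>m. ev m (word_val HH bb hh w) = wv m w) sequentially" using wh by blast
  have "eventually (\<lambda>m. ev m (word_val HH bb hh (l # w)) = wv m (l # w)) sequentially"
    using e1 e2 e3 by eventually_elim (simp add: wv_def)
  moreover have "word_val HH bb hh (l # w) \<in> carrier HH" using lh wh by simp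
  ultimately show ?case by blast
qed

lemma main_eq: "good n w \<Longrightarrow> word_val HH bb hh w = \<one>\<^bsub>HH\<^esub> \<longleftrightarrow> wv n w = \<one>\<^bsub>K\<^esub>"
proof -
  assume g: "good n w"
  define x where "x = word_val HH bb hh w"
  have xc: "x \<in> carrier HH" and evx: "eventually (\<lambda>m. ev m x = wv m w) sequentially"
    using ev_word[OF g] by (auto simp: x_def)
  have L: "x \<in> LL" "rep x = x" using carrierH xc by blast+
  have "x = \<one>\<^bsub>HH\<^esub> \<longleftrightarrow> rep x = rep []" using L by (simp add: HH_simps)
  also have "\<dots> \<longleftrightarrow> eqv x []" by (rule rep_eq_iff[OF L(1)]) simp
  also have "\<dots> \<longleftrightarrow> eventually (\<lambda>m. ev m x = \<one>\<^bsub>K\<^esub>) sequentially" by (simp add: eqv_def)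
  also have "\<dots> \<longleftrightarrow> eventually (\<lambda>m. wv m w = \<one>\<^bsub>K\<^esub>) sequentially"
    by (rule eventually_subst) (rule eventually_mono[OF evx], simp)
  also have "\<dots> \<longleftrightarrow> wv n w = \<one>\<^bsub>K\<^esub>" by (rule ev_stab) (rule stab[OF g])
  finally show ?thesis by (simp add: x_def)
qed

lemma good_iff: "good n w \<longleftrightarrow> word_vars w \<subseteq> I \<and> word_params w \<subseteq> carrier (G n)"
proof
  assume "good n w" then show "word_vars w \<subseteq> I \<and> word_params w \<subseteq> carrier (G n)"
    unfolding good_def word_vars_def word_params_def by force
next
  assume h: "word_vars w \<subseteq> I \<and> word_params w \<subseteq> carrier (G n)"
  show "good n w" unfolding good_def
  proof
    fix l assume l: "l \<in> set w"
    obtain v f where vf: "l = (v, f)" by (cases l)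
    show "case fst l of Inl t \<Rightarrow> t \<in> I | Inr c \<Rightarrow> c \<in> carrier (G n)"
      using h l by (cases v) (auto simp: vf word_vars_def word_params_def)
  qed
qed

lemma tp_eq: "tp_bs I (carrier (G n)) HH hh bb = tp_bs I (carrier (G n)) (G (Suc n)) id (\<lambda>t. bprod G a t n)"
proof -
  interpret K: group K by (rule group_K)
  have "p \<in> tp_bs I (carrier (G n)) HH hh bb \<longleftrightarrow> p \<in> tp_bs I (carrier (G n)) (G (Suc n)) id (\<lambda>t. bprod G a t n)" for p
  proof -
  obtain eq w where p: "p = (eq, w)" by (cases p)
  show "p \<in> tp_bs I (carrier (G n)) HH hh bb \<longleftrightarrow> p \<in> tp_bs I (carrier (G n)) (G (Suc n)) id (\<lambda>t. bprod G a t n)"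
  proof (cases "good n w")
    case True
    have CS: "carrier (G n) \<subseteq> carrier (G (Suc n))" by (rule carrier_mono) simp
    have wk: "wok I (carrier (G (Suc n))) (bp n) id w"
      using good_wok[OF True CS] bp_in by auto
    have cons: "word_val (G (Suc n)) (bp n) id w = wv n w"
      using K.wv_consistent[OF subK wk] by (simp only: GE wv_def)
    have vp: "word_vars w \<subseteq> I" "word_params w \<subseteq> carrier (G n)" using True good_iff by auto
    show ?thesis using vp main_eq[OF True] cons
      by (simp add: tp_bs_def p oneK[of "Suc n"])
  next
    case False
    then show ?thesis using good_iff by (auto simp: tp_bs_def p)
  qed
  qed
  then show ?thesis by blast
qed

lemma hh_hom: "hh \<in> hom (G n) HH"
proof (rule homI)
  fix x assume "x \<in> carrier (G n)" then show "hh x \<in> carrier HH" by (rule hh_in[OF inU])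
next
  interpret K: group K by (rule group_K)
  fix x y assume xy: "x \<in> carrier (G n)" "y \<in> carrier (G n)"
  have xyK: "x \<in> carrier K" "y \<in> carrier K" using inU[OF xy(1)] inU[OF xy(2)] by (simp_all add: carrierK)
  have xyU: "x \<otimes>\<^bsub>G n\<^esub> y \<in> U" by (rule inU[OF monoid.m_closed[OF group.is_monoid[OF grp[of n]] xy]])
  have eq: "eqv [Inl (x \<otimes>\<^bsub>G n\<^esub> y)] ([Inl x] @ [Inl y])"
    unfolding eqv_def using xyK by (simp add: ev_Cons val_def multK[of n, symmetric] K.m_assoc)
  have L: "[Inl x] \<in> LL" "[Inl y] \<in> LL" "[Inl (x \<otimes>\<^bsub>G n\<^esub> y)] \<in> LL"
    using xyU inU[OF xy(1)] inU[OF xy(2)] by simp_all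
  have "hh x \<otimes>\<^bsub>HH\<^esub> hh y = rep ([Inl x] @ [Inl y])" using rep_app[OF L(1,2)] by (simp add: HH_simps hh_def)
  also have "\<dots> = hh (x \<otimes>\<^bsub>G n\<^esub> y)" unfolding hh_def by (rule rep_cong[OF eqv_sym[OF eq]])
  finally show "hh (x \<otimes>\<^bsub>G n\<^esub> y) = hh x \<otimes>\<^bsub>HH\<^esub> hh y" by simp
qed

lemma hh_inj: "inj_on hh U"
proof (rule inj_onI)
  interpret K: group K by (rule group_K)
  fix x y assume h: "x \<in> U" "y \<in> U" "hh x = hh y"
  obtain n where n: "x \<in> carrier (G n)" "y \<in> carrier (G n)" using U2[OF h(1,2)] by blast
  have lg: "lgood n [Inl x]" "lgood n [Inl y]" using n by (auto simp: lgood_def)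
  have "eqv [Inl x] [Inl y]" using h(3) rep_eq_iff[OF lgood_LL[OF lg(1)] lgood_LL[OF lg(2)]] by (simp add: hh_def)
  then have "ev n [Inl x] = ev n [Inl y]" using eqv_char[OF lg] by simp
  then show "x = y" using h by (simp add: ev_single val_def)
qed

lemma gen_H: "carrier HH = generate HH (hh ` U \<union> bb ` I)"
proof
  interpret H: group HH by (rule group_HH)
  have sub: "hh ` U \<union> bb ` I \<subseteq> carrier HH" using hh_in bb_in by blast
  show "generate HH (hh ` U \<union> bb ` I) \<subseteq> carrier HH" using H.generate_incl[OF sub] .
  show "carrier HH \<subseteq> generate HH (hh ` U \<union> bb ` I)"
  proof
    fix x assume "x \<in> carrier HH"
    then obtain l where l: "l \<in> LL" "x = rep l" by (auto simp: HH_def)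
    have "rep l \<in> generate HH (hh ` U \<union> bb ` I)" using l(1)
    proof (induction l)
      case Nil then show ?case using generate.one[of HH] by (simp add: HH_simps)
    next
      case (Cons c l)
      have L: "[c] \<in> LL" "l \<in> LL" using Cons.prems by auto
      have rc: "rep [c] \<in> hh ` U \<union> bb ` I" using L(1) by (cases c) (auto simp: hh_def bb_def)
      have "rep (c # l) = rep [c] \<otimes>\<^bsub>HH\<^esub> rep l" using rep_app[OF L] by (simp add: HH_simps)
      then show ?case using generate.eng[OF generate.incl[OF rc] Cons.IH[OF L(2)]] by simp
    qed
    then show "x \<in> generate HH (hh ` U \<union> bb ` I)" using l by simp
  qed
qed

lemma ev_gen: "(\<And>c. c \<in> set l \<Longrightarrow> val n c \<in> V) \<Longrightarrow>
   ev n l \<in> generate (G (Suc n)) V"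
proof (induction l)
  case Nil then show ?case using generate.one[of "G (Suc n)" V] by (simp add: oneK[of "Suc n"])
next
  case (Cons c l)
  have v: "val n c \<in> V" using Cons.prems by simp
  have r: "ev n l \<in> generate (G (Suc n)) V" using Cons by simp
  have "val n c \<otimes>\<^bsub>G (Suc n)\<^esub> ev n l \<in> generate (G (Suc n)) V"
    by (rule generate.eng[OF generate.incl[OF v] r])
  then show ?case by (simp add: ev_Cons multK[of "Suc n"])
qed

lemma lf_H: "locally_finite_group HH"
  unfolding locally_finite_group_def
proof (intro conjI allI impI)
  show grpH: "group HH" by (rule group_HH)
  interpret H: group HH by (rule group_HH)
  fix S assume hS: "S \<subseteq> carrier HH \<and> finite S"
  define Lam where "Lam = \<Union> (set ` S)"
  have finL: "finite Lam" using hS by (simp add: Lam_def)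
  have SLL: "\<And>s. s \<in> S \<Longrightarrow> s \<in> LL \<and> rep s = s" using hS carrierH by blast
  have LamLL: "\<And>c. c \<in> Lam \<Longrightarrow> (case c of Inl g \<Rightarrow> g \<in> U | Inr t \<Rightarrow> t \<in> I)"
  proof -
    fix c assume "c \<in> Lam"
    then obtain s where s: "s \<in> S" "c \<in> set s" by (auto simp: Lam_def)
    then show "case c of Inl g \<Rightarrow> g \<in> U | Inr t \<Rightarrow> t \<in> I" using SLL[OF s(1)] by (auto simp: LL_def)
  qed
  have finv: "finite (Inl -` Lam)" by (rule finite_vimageI[OF finL]) (auto simp: inj_on_def)
  have "Inl -` Lam \<subseteq> U" using LamLL by force
  then obtain n where n: "Inl -` Lam \<subseteq> carrier (G n)" using finU[OF finv] by blast
  define A where "A = {l. set l \<subseteq> Lam}"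
  have Agood: "lgood n l" if "l \<in> A" for l
    unfolding lgood_def
  proof
    fix c assume c: "c \<in> set l"
    then have cL: "c \<in> Lam" using that by (auto simp: A_def)
    show "case c of Inl g \<Rightarrow> g \<in> carrier (G n) | Inr t \<Rightarrow> t \<in> I"
      using n LamLL[OF cL] cL by (cases c) auto
  qed
  have ALL: "\<And>l. l \<in> A \<Longrightarrow> l \<in> LL" using Agood lgood_LL by blast
  define T where "T = rep ` A"
  have gT: "generate HH S \<subseteq> T"
  proof
    fix x assume "x \<in> generate HH S" then show "x \<in> T"
    proof (induction rule: generate.induct)
      case one then show ?case by (auto simp: T_def A_def HH_simps)
    next
      case (incl h)
      then have "h = rep h" "h \<in> A" using SLL by (auto simp: A_def Lam_def)
      then show ?case unfolding T_def by blast
    next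
      case (inv h)
      have hL: "h \<in> LL" "rep h = h" using SLL inv by auto
      have hC: "h \<in> carrier HH" using hS inv by blast
      obtain y where y: "y \<in> LL" "set y \<subseteq> set h" "eqv (y @ h) []" using inv_ex[OF hL(1)] by blast
      have r: "rep y \<in> LL" "eqv (rep y) y" using rep[OF y(1)] by blast+
      have "eqv (rep y @ h) (y @ h)" by (rule eqv_app[OF r(2) eqv_refl r(1) y(1) hL(1) hL(1)])
      then have "rep (rep y @ h) = rep []" by (rule rep_cong[OF eqv_trans[OF _ y(3)]])
      then have "rep y \<otimes>\<^bsub>HH\<^esub> h = \<one>\<^bsub>HH\<^esub>" by (simp only: HH_simps)
      then have "inv\<^bsub>HH\<^esub> h = rep y" using H.inv_equality rep_in[OF y(1)] hC by blast
      moreover have "y \<in> A" using y(2) inv by (auto simp: A_def Lam_def)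
      ultimately show ?case unfolding T_def by blast
    next
      case (eng h1 h2)
      then obtain l1 l2 where l12: "l1 \<in> A" "l2 \<in> A" "h1 = rep l1" "h2 = rep l2" by (auto simp: T_def)
      then have "l1 @ l2 \<in> A" by (auto simp: A_def)
      moreover have "h1 \<otimes>\<^bsub>HH\<^esub> h2 = rep (l1 @ l2)"
        using rep_app[OF ALL[OF l12(1)] ALL[OF l12(2)]] l12 by (simp add: HH_simps)
      ultimately show ?case unfolding T_def by blast
    qed
  qed
  have finT: "finite T"
  proof -
    define V where "V = val n ` Lam"
    have VC: "V \<subseteq> carrier (G (Suc n))"
    proof
      fix v assume "v \<in> V"
      then obtain c where c: "c \<in> Lam" "v = val n c" by (auto simp: V_def)
      have CS: "carrier (G n) \<subseteq> carrier (G (Suc n))" by (rule carrier_mono) simp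
      show "v \<in> carrier (G (Suc n))" using c n CS LamLL[OF c(1)] bp_in
        by (cases c) (auto simp: val_def)
    qed
    have finV: "finite (generate (G (Suc n)) V)"
      using lf[of "Suc n"] VC finL by (simp add: locally_finite_group_def V_def)
    have evA: "ev n ` A \<subseteq> generate (G (Suc n)) V"
    proof
      fix v assume "v \<in> ev n ` A"
      then obtain l where l: "l \<in> A" "v = ev n l" by blast
      have "\<And>c. c \<in> set l \<Longrightarrow> val n c \<in> V" using l(1) by (auto simp: A_def V_def)
      then show "v \<in> generate (G (Suc n)) V" using ev_gen l(2) by blast
    qed
    define f where "f v = rep (SOME l. l \<in> A \<and> ev n l = v)" for v
    have "T \<subseteq> f ` (ev n ` A)"
    proof
      fix x assume "x \<in> T"
      then obtain l where l: "l \<in> A" "x = rep l" by (auto simp: T_def)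
      define l0 where "l0 = (SOME l'. l' \<in> A \<and> ev n l' = ev n l)"
      have l0: "l0 \<in> A \<and> ev n l0 = ev n l" unfolding l0_def by (rule someI[of _ l]) (use l in simp)
      then have e0: "eqv l0 l" using eqv_char[OF Agood[of l0] Agood[OF l(1)]] by blast
      have "f (ev n l) = rep l0" by (simp add: f_def l0_def)
      also have "\<dots> = rep l" by (rule rep_cong[OF e0])
      finally have "f (ev n l) = x" using l(2) by simp
      then show "x \<in> f ` (ev n ` A)" using l by blast
    qed
    moreover have "finite (f ` (ev n ` A))" by (rule finite_imageI[OF finite_subset[OF evA finV]])
    ultimately show ?thesis by (rule finite_subset)
  qed
  show "finite (generate HH S)" using gT finT by (rule finite_subset)
qed

lemma main: "locally_finite_group HH \<and> (\<forall>n. hh \<in> hom (G n) HH) \<and> inj_on hh (\<Union>n. carrier (G n)) \<and>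
           (\<forall>t\<in>I. bb t \<in> carrier HH) \<and>
           carrier HH = generate HH (hh ` (\<Union>n. carrier (G n)) \<union> bb ` I) \<and>
           (\<forall>n. tp_bs I (carrier (G n)) HH hh bb =
                 tp_bs I (carrier (G n)) (G (Suc n)) id (\<lambda>t. bprod G a t n))"
  apply (intro conjI allI ballI)
       apply (rule lf_H)
      apply (rule hh_hom)
     apply (rule hh_inj[unfolded U_def])
    apply (erule bb_in)
   apply (rule gen_H[unfolded U_def])
  apply (rule tp_eq)
  done

end

theorem claim2p20:
  fixes G :: "nat \<Rightarrow> 'a monoid"
    and I :: "'i set"
    and a :: "'i \<Rightarrow> nat \<Rightarrow> 'a"
  assumes lf: "\<And>n. locally_finite_group (G n)"
    and sub: "\<And>n. subgroup (carrier (G n)) (G (Suc n))"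
    and restr: "\<And>n. G n = (G (Suc n))\<lparr>carrier := carrier (G n)\<rparr>"
    and a_in: "\<And>n t. t \<in> I \<Longrightarrow> a t n \<in> carrier (G (Suc n))"
    and alpha: "\<And>n. tp_bs I (carrier (G n)) (G (Suc n)) id (\<lambda>t. a t n)
                   \<subseteq> tp_bs I (carrier (G (Suc n))) (G (Suc (Suc n))) id (\<lambda>t. a t (Suc n))"
    and beta: "\<And>n. generate (G (Suc n)) ((\<lambda>t. a t n) ` I) \<inter> carrier (G n) = {\<one>\<^bsub>G n\<^esub>}"
    and e: "\<And>n t g. t \<in> I \<Longrightarrow> g \<in> carrier (G n) \<Longrightarrow>
              a t n \<otimes>\<^bsub>G (Suc n)\<^esub> g = g \<otimes>\<^bsub>G (Suc n)\<^esub> a t n"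
  shows "\<exists>(H :: ('a + 'i) list monoid) (h :: 'a \<Rightarrow> ('a + 'i) list) (b :: 'i \<Rightarrow> ('a + 'i) list).
           locally_finite_group H \<and>
           (\<forall>n. h \<in> hom (G n) H) \<and>
           inj_on h (\<Union>n. carrier (G n)) \<and>
           (\<forall>t\<in>I. b t \<in> carrier H) \<and>
           carrier H = generate H (h ` (\<Union>n. carrier (G n)) \<union> b ` I) \<and>
           (\<forall>n. tp_bs I (carrier (G n)) H h b =
                 tp_bs I (carrier (G n)) (G (Suc n)) id (\<lambda>t. bprod G a t n))"
  proof -
  interpret S: cstp G I a
    apply (rule cstp.intro)
          apply (fact lf)
         apply (fact sub)
        apply (fact restr)
       apply (fact a_in)
      apply (fact alpha)
     apply (fact beta)
    apply (fact e)
    done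
  show ?thesis
    by (rule exI[of _ S.HH], rule exI[of _ S.hh], rule exI[of _ S.bb]) (rule S.main)
qed

end
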